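(* Let $\eta>0$ and let $m,k,d$ be positive integers. Then there exists a positive integer $n_1=n_1(\eta,m,k,d)$ such that for every integer $n\geq n_1$ and every $k$-integer polynomial $Q\colon\mathbb{F}_2^{\binom{[n]}{\leq 2}}\to\mathbb{Z}_{2^k}$ of degree $d$, there is a collection $\mathcal{V}$ of pairwise disjoint $m$-dimensional block HJ-subspaces of $\mathbb{F}_2^{\binom{[n]}{\leq 2}}$ such that (i) $\mathbb{P}\big[\mathbb{F}_2^{\binom{[n]}{\leq 2}}\setminus\bigcup\mathcal{V}\big]\leq\eta$, and (ii) for every $V\in\mathcal{V}$, $\deg(Q\circ e_V)<\deg(Q)$, where $e_V\colon\mathbb{F}_2^{\binom{[m]}{\leq 2}}\to V$ is the HJ-embedding associated with $V$.
   Context: $\binom{[n]}{\leq 2}$ is the set of nonempty subsets of $[n]$ with at most two elements; $\mathbb{P}$ is the uniform probability measure on $\mathbb{F}_2^{\binom{[n]}{\leq 2}}$; $\mathbb{Z}_{2^k}=\mathbb{Z}/2^k\mathbb{Z}$. Integer polynomial: $Q\colon\mathbb{F}_2^{\binom{[n]}{\leq 2}}\to\mathbb{Z}_{2^k}$ is a $k$-integer polynomial of degree at most $d$ if $Q(x)=\alpha+\sum_{F}\lambda_F\prod_{e\in F}x(e)\bmod 2^k$, summing over nonempty $F\subseteq\binom{[n]}{\leq 2}$ with $|F|\leq d$, with $\alpha,\lambda_F\in\mathbb{Z}_{2^k}$ and $x(e)\in\{0,1\}\subseteq\mathbb{Z}_{2^k}$; its degree is the least such $d$ (so functions of the same form on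 $\mathbb{F}_2^{\binom{[m]}{\leq 2}}$ have degrees defined likewise). HJ-subspaces: let $n\geq m\geq 1$ and $\boldsymbol{I}=(I_1,\dots,I_m)$ pairwise disjoint nonempty subsets of $[n]$ with $\min I_1<\dots<\min I_m$. For $q\in\binom{[m]}{\leq 2}$ let $b_q$ be the indicator of $\{p\in\binom{[n]}{\leq 2}: p\subseteq\bigcup_{i\in q}I_i,\ p\cap I_i\neq\emptyset\ \forall i\in q\}$, and $\mathrm{Id}_{\boldsymbol I}(x)=\sum_q x(q)b_q$ for $x\in\mathbb{F}_2^{\binom{[m]}{\leq 2}}$. An HJ-embedding is $e=\mathrm{Id}_{\boldsymbol I}+c$ with $c\in\mathbb{F}_2^{\binom{[n]}{\leq 2}}$ vanishing on $\binom{I_1\cup\dots\cup I_m}{\leq 2}$; its image $V$ is an HJ-subspace of dimension $m$ with wildcard sets $\boldsymbol I$, and $e_V:=e$. $V$ is block if $\max I_i<\min I_{i+1}$ for all $i<m$. *)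

theory Defs
  imports Complex_Main
begin

definition edges :: "nat \<Rightarrow> nat set set" where
  "edges n = {p. p \<subseteq> {1..n} \<and> p \<noteq> {} \<and> card p \<le> 2}"

text \<open>Points of F_2^(edges n), as boolean functions vanishing outside edges n.\<close>
definition cube :: "nat \<Rightarrow> (nat set \<Rightarrow> bool) set" where
  "cube n = {x. \<forall>p. x p \<longrightarrow> p \<in> edges n}"

text \<open>Q is a k-integer polynomial of degree at most d on cube n (values in Z_(2^k),
  represented by residues mod 2^k).\<close>
definition kpoly_le :: "nat \<Rightarrow> nat \<Rightarrow> nat \<Rightarrow> ((nat set \<Rightarrow> bool) \<Rightarrow> int) \<Rightarrow> bool" where
  "kpoly_le k n d Q \<longleftrightarrow> (\<exists>(\<alpha>::int) (coef::nat set set \<Rightarrow> int). \<forall>x\<in>cube n.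
     Q x = (\<alpha> + (\<Sum>F\<in>{F. F \<subseteq> edges n \<and> F \<noteq> {} \<and> card F \<le> d}.
              coef F * (\<Prod>e\<in>F. if x e then 1 else 0))) mod 2^k)"

definition kpoly :: "nat \<Rightarrow> nat \<Rightarrow> ((nat set \<Rightarrow> bool) \<Rightarrow> int) \<Rightarrow> bool" where
  "kpoly k n Q \<longleftrightarrow> (\<exists>d. kpoly_le k n d Q)"

definition kdeg :: "nat \<Rightarrow> nat \<Rightarrow> ((nat set \<Rightarrow> bool) \<Rightarrow> int) \<Rightarrow> nat" where
  "kdeg k n Q = (LEAST d. kpoly_le k n d Q)"

definition wildcards :: "nat \<Rightarrow> nat \<Rightarrow> (nat \<Rightarrow> nat set) \<Rightarrow> bool" where
  "wildcards n m I \<longleftrightarrow> 1 \<le> m \<and> m \<le> n \<and>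
     (\<forall>i\<in>{1..m}. I i \<noteq> {} \<and> I i \<subseteq> {1..n}) \<and>
     (\<forall>i\<in>{1..m}. \<forall>j\<in>{1..m}. i \<noteq> j \<longrightarrow> I i \<inter> I j = {}) \<and>
     (\<forall>i\<in>{1..<m}. Min (I i) < Min (I (Suc i)))"

definition block :: "nat \<Rightarrow> (nat \<Rightarrow> nat set) \<Rightarrow> bool" where
  "block m I \<longleftrightarrow> (\<forall>i\<in>{1..<m}. Max (I i) < Min (I (Suc i)))"

definition bq :: "nat \<Rightarrow> (nat \<Rightarrow> nat set) \<Rightarrow> nat set \<Rightarrow> nat set \<Rightarrow> bool" where
  "bq n I q p \<longleftrightarrow> p \<in> edges n \<and> p \<subseteq> (\<Union>i\<in>q. I i) \<and> (\<forall>i\<in>q. p \<inter> I i \<noteq> {})"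

text \<open>Id_I(x) = sum over q of x(q) b_q, computed in F_2 (parity).\<close>
definition IdI :: "nat \<Rightarrow> nat \<Rightarrow> (nat \<Rightarrow> nat set) \<Rightarrow> (nat set \<Rightarrow> bool) \<Rightarrow> nat set \<Rightarrow> bool" where
  "IdI n m I x p \<longleftrightarrow> odd (card {q\<in>edges m. x q \<and> bq n I q p})"

definition shift_ok :: "nat \<Rightarrow> nat \<Rightarrow> (nat \<Rightarrow> nat set) \<Rightarrow> (nat set \<Rightarrow> bool) \<Rightarrow> bool" where
  "shift_ok n m I c \<longleftrightarrow> c \<in> cube n \<and>
     (\<forall>p. p \<subseteq> (\<Union>i\<in>{1..m}. I i) \<and> p \<noteq> {} \<and> card p \<le> 2 \<longrightarrow> \<not> c p)"

text \<open>HJ-embedding e = Id_I + c (addition in F_2 = xor).\<close>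
definition hj_emb :: "nat \<Rightarrow> nat \<Rightarrow> (nat \<Rightarrow> nat set) \<Rightarrow> (nat set \<Rightarrow> bool)
    \<Rightarrow> (nat set \<Rightarrow> bool) \<Rightarrow> (nat set \<Rightarrow> bool)" where
  "hj_emb n m I c x = (\<lambda>p. IdI n m I x p \<noteq> c p)"

definition hj_space :: "nat \<Rightarrow> nat \<Rightarrow> (nat \<Rightarrow> nat set) \<Rightarrow> (nat set \<Rightarrow> bool)
    \<Rightarrow> (nat set \<Rightarrow> bool) set" where
  "hj_space n m I c = hj_emb n m I c ` cube m"

end

theory Submission
  imports Defs "HOL-Library.Ramsey"
begin


lemma sl_append:
  fixes X Z :: "nat set"
  assumes "finite X" "finite Z" "\<forall>x\<in>X. \<forall>z\<in>Z. x < z"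
  shows "sorted_list_of_set (X \<union> Z) = sorted_list_of_set X @ sorted_list_of_set Z"
proof -
  have d: "X \<inter> Z = {}" using assms(3) by auto
  show ?thesis
    using assms d
    by (subst sorted_list_of_set_unique[symmetric])
       (auto simp: sorted_wrt_append card_Un_disjoint)
qed

lemma sl_image:
  fixes X :: "nat set" and \<phi> :: "nat \<Rightarrow> nat"
  assumes "finite X" "strict_mono_on X \<phi>"
  shows "sorted_list_of_set (\<phi> ` X) = map \<phi> (sorted_list_of_set X)"
proof -
  have inj: "inj_on \<phi> X" using assms(2) strict_mono_on_imp_inj_on by blast
  have s: "sorted_wrt (<) (sorted_list_of_set X)" by simp
  have "sorted_wrt (<) (map \<phi> (sorted_list_of_set X))"
    unfolding sorted_wrt_map
    by (rule sorted_wrt_mono_rel[OF _ s]) (use assms in \<open>auto simp: strict_mono_on_def\<close>)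
  then show ?thesis
    using assms inj
    by (subst sorted_list_of_set_unique[symmetric]) (auto simp: card_image distinct_card[symmetric] length_map)
qed

lemma ramsey_hom:
  fixes CS :: "'c set"
  assumes "finite CS" "CS \<noteq> {}"
  shows "\<exists>N::nat. \<forall>col. (\<forall>Y\<in>nsets {..<N} r. col Y \<in> CS) \<longrightarrow>
     (\<exists>H. H \<subseteq> {..<N} \<and> card H = M \<and> (\<forall>Y\<in>nsets H r. \<forall>Y'\<in>nsets H r. col Y = col Y'))"
proof -
  obtain h where h: "bij_betw h CS {0..<card CS}" using ex_bij_betw_finite_nat[OF assms(1)] by blast
  obtain N :: nat where N: "partn_lst {..<N} (replicate (card CS) M) r" using ramsey_full[of "replicate (card CS) M" r] by blast
  show ?thesis
  proof (rule exI[of _ N], intro allI impI)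
    fix col :: "nat set \<Rightarrow> 'c"
    assume col: "\<forall>Y\<in>nsets {..<N} r. col Y \<in> CS"
    have f: "(h \<circ> col) \<in> nsets {..<N} r \<rightarrow> {..<length (replicate (card CS) M)}"
      using col h by (auto simp: bij_betw_def)
    obtain i H where i: "i < length (replicate (card CS) M)" and H: "H \<in> nsets {..<N} (replicate (card CS) M ! i)"
      and hom: "(h \<circ> col) ` (nsets H r) \<subseteq> {i}"
      using partn_lstE[OF N f refl] by blast
    have HM: "H \<in> nsets {..<N} M" using H i by simp
    have sub: "nsets H r \<subseteq> nsets {..<N} r" using HM by (auto simp: nsets_def)
    have "\<forall>Y\<in>nsets H r. \<forall>Y'\<in>nsets H r. col Y = col Y'"
    proof (intro ballI)
      fix Y Y' assume Y: "Y \<in> nsets H r" and Y': "Y' \<in> nsets H r"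
      have "h (col Y) = h (col Y')" using hom Y Y' by auto
      moreover have "col Y \<in> CS" "col Y' \<in> CS" using col Y Y' sub by auto
      ultimately show "col Y = col Y'" using h by (auto simp: bij_betw_def inj_on_def)
    qed
    then show "\<exists>H. H \<subseteq> {..<N} \<and> card H = M \<and> (\<forall>Y\<in>nsets H r. \<forall>Y'\<in>nsets H r. col Y = col Y')"
      using HM by (auto simp: nsets_def)
  qed
qed

definition chi :: "nat \<Rightarrow> nat \<Rightarrow> (nat set set \<Rightarrow> int) \<Rightarrow> nat set \<Rightarrow> (nat set set \<Rightarrow> int)" where
  "chi k r coef Y = restrict (\<lambda>P. coef ((\<lambda>p. (\<lambda>j. sorted_list_of_set Y ! j) ` p) ` P) mod 2^k) (Pow (Pow {..<r}))"

lemma inv_lemma: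
  fixes H :: "nat set" and coef :: "nat set set \<Rightarrow> int" and \<phi> :: "nat \<Rightarrow> nat"
  assumes finH: "finite H" and cardH: "card H = M" and rM: "r \<le> M"
  and hom: "\<forall>Y Y'. Y \<subseteq> H \<and> card Y = r \<and> Y' \<subseteq> H \<and> card Y' = r \<longrightarrow> chi k r coef Y = chi k r coef Y'"
  and S'_def: "S' = (\<lambda>j. sorted_list_of_set H ! j) ` {..<M - r}"
  and FS: "\<Union>F \<subseteq> S'" and Fc: "card (\<Union>F) \<le> r"
  and \<phi>m: "strict_mono_on (\<Union>F) \<phi>" and \<phi>S: "\<phi> ` \<Union>F \<subseteq> S'"
  shows "coef ((`) \<phi> ` F) mod 2^k = coef F mod 2^k"
proof -
  define L where "L = sorted_list_of_set H"
  have Ls: "sorted_wrt (<) L" and Ll: "length L = M" and Lset: "set L = H"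
    using finH cardH by (auto simp: L_def)
  define X where "X = \<Union>F"
  have finS': "finite S'" using S'_def by simp
  have finX: "finite X" using FS finS' X_def finite_subset by blast
  define c where "c = card X"
  have cr: "c \<le> r" using Fc X_def c_def by simp
  define Pad where "Pad = (\<lambda>j. L ! j) ` {M - r ..< M - c}"
  have S'L: "S' = (\<lambda>j. L ! j) ` {..<M - r}" using S'_def L_def by simp
  have S'H: "S' \<subseteq> H" using S'L Ll Lset by auto
  have PadH: "Pad \<subseteq> H" using Pad_def Ll Lset by auto
  have injL: "inj_on (\<lambda>j. L ! j) {..<M}"
    using Ls Ll by (auto simp: inj_on_def strict_sorted_iff nth_eq_iff_index_eq)
  have cardPad: "card Pad = r - c"
  proof -
    have "inj_on (\<lambda>j. L ! j) {M - r ..< M - c}" by (rule inj_on_subset[OF injL]) auto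
    then show ?thesis unfolding Pad_def using rM cr by (simp add: card_image)
  qed
  have less: "\<forall>x\<in>S'. \<forall>z\<in>Pad. x < z"
  proof (intro ballI)
    fix x z assume "x \<in> S'" "z \<in> Pad"
    then obtain i j where "i < M - r" "M - r \<le> j" "j < M - c" "x = L ! i" "z = L ! j"
      unfolding S'L Pad_def by auto
    then show "x < z" using sorted_wrt_nth_less[OF Ls, of i j] Ll by simp
  qed
  have finPad: "finite Pad" using Pad_def by simp
  define X' where "X' = \<phi> ` X"
  have injphi: "inj_on \<phi> X" using \<phi>m X_def strict_mono_on_imp_inj_on by blast
  have cX': "card X' = c" using X'_def c_def injphi card_image by blast
  have X'S: "X' \<subseteq> S'" using \<phi>S X_def X'_def by simp
  have finX': "finite X'" using X'_def finX by simp
  define Y where "Y = X \<union> Pad"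
  define Y' where "Y' = X' \<union> Pad"
  have XPad: "X \<inter> Pad = {}" using less FS X_def by fastforce
  have X'Pad: "X' \<inter> Pad = {}" using less X'S by fastforce
  have cY: "card Y = r" unfolding Y_def using card_Un_disjoint[OF finX finPad XPad] cardPad cr c_def by simp
  have cY': "card Y' = r" unfolding Y'_def using card_Un_disjoint[OF finX' finPad X'Pad] cardPad cr cX' by simp
  have YH: "Y \<subseteq> H" using Y_def FS X_def S'H PadH by auto
  have Y'H: "Y' \<subseteq> H" using Y'_def X'S S'H PadH by auto
  have slY: "sorted_list_of_set Y = sorted_list_of_set X @ sorted_list_of_set Pad"
    unfolding Y_def using sl_append[OF finX finPad] less FS X_def by blast
  have slY': "sorted_list_of_set Y' = map \<phi> (sorted_list_of_set X) @ sorted_list_of_set Pad"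
    unfolding Y'_def using sl_append[OF finX' finPad] less X'S sl_image[OF finX] \<phi>m X_def X'_def by auto
  define EY where "EY = (\<lambda>j. sorted_list_of_set Y ! j)"
  define EY' where "EY' = (\<lambda>j. sorted_list_of_set Y' ! j)"
  define P where "P = (\<lambda>p. {j. j < r \<and> EY j \<in> p}) ` F"
  have PP: "P \<in> Pow (Pow {..<r})" using P_def by auto
  have lX: "length (sorted_list_of_set X) = c" using c_def finX by simp
  have key1: "(\<lambda>j. EY j) ` {j. j < r \<and> EY j \<in> p} = p" if "p \<in> F" for p
  proof
    show "(\<lambda>j. EY j) ` {j. j < r \<and> EY j \<in> p} \<subseteq> p" by auto
    show "p \<subseteq> (\<lambda>j. EY j) ` {j. j < r \<and> EY j \<in> p}"
    proof
      fix v assume v: "v \<in> p"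
      have "v \<in> set (sorted_list_of_set Y)" using v that X_def Y_def finX finPad by auto
      then obtain j where "j < length (sorted_list_of_set Y)" "sorted_list_of_set Y ! j = v"
        by (auto simp: in_set_conv_nth)
      then show "v \<in> (\<lambda>j. EY j) ` {j. j < r \<and> EY j \<in> p}"
        using v cY EY_def by (auto intro!: image_eqI[of _ _ j])
    qed
  qed
  have key2: "(\<lambda>j. EY' j) ` {j. j < r \<and> EY j \<in> p} = \<phi> ` p" if "p \<in> F" for p
  proof
    show "(\<lambda>j. EY' j) ` {j. j < r \<and> EY j \<in> p} \<subseteq> \<phi> ` p"
    proof
      fix w assume "w \<in> (\<lambda>j. EY' j) ` {j. j < r \<and> EY j \<in> p}"
      then obtain j where j: "j < r" "EY j \<in> p" "w = EY' j" by auto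
      have jc: "j < c"
      proof (rule ccontr)
        assume "\<not> j < c"
        then have "EY j = sorted_list_of_set Pad ! (j - c)" using EY_def slY lX by (simp add: nth_append)
        moreover have "j - c < length (sorted_list_of_set Pad)" using j cardPad finPad \<open>\<not> j < c\<close> cr by simp
        ultimately have "EY j \<in> Pad" using finPad by (metis nth_mem set_sorted_list_of_set)
        then show False using j XPad that X_def by blast
      qed
      have "EY j = sorted_list_of_set X ! j" using EY_def slY lX jc by (simp add: nth_append)
      moreover have "EY' j = \<phi> (sorted_list_of_set X ! j)" using EY'_def slY' lX jc by (simp add: nth_append)
      ultimately show "w \<in> \<phi> ` p" using j by auto
    qed
    show "\<phi> ` p \<subseteq> (\<lambda>j. EY' j) ` {j. j < r \<and> EY j \<in> p}"
    proof
      fix w assume "w \<in> \<phi> ` p"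
      then obtain v where v: "v \<in> p" "w = \<phi> v" by auto
      have "v \<in> set (sorted_list_of_set X)" using v that X_def finX by auto
      then obtain j where j: "j < c" "sorted_list_of_set X ! j = v" using lX by (auto simp: in_set_conv_nth)
      have "EY j = v" using EY_def slY lX j by (simp add: nth_append)
      moreover have "EY' j = w" using EY'_def slY' lX j v by (simp add: nth_append)
      ultimately show "w \<in> (\<lambda>j. EY' j) ` {j. j < r \<and> EY j \<in> p}" using j cr v by force
    qed
  qed
  have e1: "(\<lambda>p. (\<lambda>j. EY j) ` p) ` P = F"
    unfolding P_def image_image using key1 by (simp cong: image_cong)
  have e2: "(\<lambda>p. (\<lambda>j. EY' j) ` p) ` P = (`) \<phi> ` F"
    unfolding P_def image_image using key2 by (simp cong: image_cong)
  have "chi k r coef Y P = chi k r coef Y' P" using hom YH Y'H cY cY' by metis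
  then show ?thesis
    using PP e1 e2 unfolding chi_def EY_def EY'_def by simp
qed



definition sw :: "nat set \<Rightarrow> nat set \<Rightarrow> nat \<Rightarrow> nat" where
 "sw W W' v = (case map_of (zip (sorted_list_of_set W) (sorted_list_of_set W')) v of Some w \<Rightarrow> w | None \<Rightarrow> v)"

lemma sw_out: "finite W \<Longrightarrow> finite W' \<Longrightarrow> card W = card W' \<Longrightarrow> v \<notin> W \<Longrightarrow> sw W W' v = v"
  unfolding sw_def by (subst map_of_zip_is_None[THEN iffD2]) auto

lemma sw_nth: "finite W \<Longrightarrow> finite W' \<Longrightarrow> card W = card W' \<Longrightarrow> i < card W \<Longrightarrow>
   sw W W' (sorted_list_of_set W ! i) = sorted_list_of_set W' ! i"
  unfolding sw_def by (subst map_of_zip_nth) auto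

lemma sw_memE:
  assumes "finite W" "v \<in> W"
  obtains i where "i < card W" "v = sorted_list_of_set W ! i"
proof -
  have "v \<in> set (sorted_list_of_set W)" using assms by simp
  then obtain i where "i < length (sorted_list_of_set W)" "sorted_list_of_set W ! i = v"
    by (auto simp: in_set_conv_nth)
  then show ?thesis using that assms by auto
qed

lemma sw_in: assumes "finite W" "finite W'" "card W = card W'" "v \<in> W" shows "sw W W' v \<in> W'"
proof -
  obtain i where i: "i < card W" "v = sorted_list_of_set W ! i" using sw_memE assms by metis
  then show ?thesis using sw_nth[OF assms(1-3) i(1)] assms
    by (metis length_sorted_list_of_set nth_mem set_sorted_list_of_set)
qed

lemma sw_inv: assumes "finite W" "finite W'" "card W = card W'" "v \<in> W" shows "sw W' W (sw W W' v) = v"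
proof -
  obtain i where i: "i < card W" "v = sorted_list_of_set W ! i" using sw_memE assms by metis
  then show ?thesis using sw_nth[OF assms(1-3) i(1)] sw_nth[OF assms(2,1) assms(3)[symmetric]] assms by simp
qed

lemma sw_image: assumes "finite W" "finite W'" "card W = card W'" shows "sw W W' ` W = W'"
proof
  show "sw W W' ` W \<subseteq> W'" using sw_in assms by blast
  show "W' \<subseteq> sw W W' ` W"
  proof
    fix w assume "w \<in> W'"
    then have "sw W W' (sw W' W w) = w" "sw W' W w \<in> W" using sw_inv sw_in assms by metis+
    then show "w \<in> sw W W' ` W" by (metis image_eqI)
  qed
qed

lemma sw_mono: assumes "finite W" "finite W'" "card W = card W'" shows "strict_mono_on W (sw W W')"
proof (rule strict_mono_onI)
  fix u v assume uv: "u \<in> W" "v \<in> W" "u < v"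
  obtain i where i: "i < card W" "u = sorted_list_of_set W ! i" using sw_memE assms uv by metis
  obtain j where j: "j < card W" "v = sorted_list_of_set W ! j" using sw_memE assms uv by metis
  have sW: "sorted_wrt (<) (sorted_list_of_set W)" and sW': "sorted_wrt (<) (sorted_list_of_set W')" by simp_all
  have "i < j"
  proof (rule ccontr)
    assume "\<not> i < j"
    then have "j \<le> i" by simp
    then have "v \<le> u" using i j sW assms
      by (metis le_eq_less_or_eq length_sorted_list_of_set order.strict_implies_order sorted_wrt_nth_less)
    then show False using uv by simp
  qed
  then show "sw W W' u < sw W W' v"
    using sw_nth[OF assms i(1)] sw_nth[OF assms j(1)] i j sorted_wrt_nth_less[OF sW'] assms by simp
qed



lemma finite_edges: "finite (edges n)"
  unfolding edges_def by (rule finite_subset[of _ "Pow {1..n}"]) auto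

locale boxsetup =
  fixes n m d k s :: nat and I :: "nat \<Rightarrow> nat set" and S' :: "nat set" and coef :: "nat set set \<Rightarrow> int"
  assumes finI: "\<And>i. i \<in> {1..m} \<Longrightarrow> finite (I i)"
  and cardI: "\<And>i. i \<in> {1..m} \<Longrightarrow> card (I i) = s"
  and IS: "\<And>i. i \<in> {1..m} \<Longrightarrow> I i \<subseteq> S'"
  and Sn: "S' \<subseteq> {1..n}"
  and ord: "\<And>i j a b. i \<in> {1..m} \<Longrightarrow> j \<in> {1..m} \<Longrightarrow> i < j \<Longrightarrow> a \<in> I i \<Longrightarrow> b \<in> I j \<Longrightarrow> a < b"
  and INV: "\<And>F \<phi>. \<Union>F \<subseteq> S' \<Longrightarrow> card (\<Union>F) \<le> 2*d \<Longrightarrow> strict_mono_on (\<Union>F) \<phi> \<Longrightarrow> \<phi> ` \<Union>F \<subseteq> S'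
      \<Longrightarrow> coef ((`) \<phi> ` F) mod 2^k = coef F mod 2^k"
  and binom: "\<And>r. 1 \<le> r \<Longrightarrow> r \<le> 2*d \<Longrightarrow> (2::int)^k dvd int (s choose r)"
begin

definition "U = (\<Union>i\<in>{1..m}. I i)"
definition "qmap p = {i\<in>{1..m}. p \<inter> I i \<noteq> {}}"
definition "EU = {p \<in> edges n. p \<subseteq> U}"
definition "box G = {F. F \<subseteq> EU \<and> card F = d \<and> qmap ` F = G}"

lemma disj: "i \<in> {1..m} \<Longrightarrow> j \<in> {1..m} \<Longrightarrow> i \<noteq> j \<Longrightarrow> I i \<inter> I j = {}"
  using ord by (metis disjoint_iff less_irrefl linorder_neqE_nat)

lemma US: "U \<subseteq> S'" using IS U_def by blast

lemma finEU: "finite EU" using finite_edges EU_def by simp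

lemma finbox: "finite (box G)"
  by (rule finite_subset[of _ "Pow EU"]) (auto simp: box_def finEU)

lemma box_card: assumes "F \<in> box G" shows "card (\<Union>F) \<le> 2*d"
proof -
  have "card (\<Union>F) \<le> sum card F" by (rule card_Union_le_sum_card)
  also have "\<dots> \<le> sum (\<lambda>_. 2) F"
    by (rule sum_mono) (use assms in \<open>auto simp: box_def EU_def edges_def\<close>)
  also have "\<dots> = 2 * d" using assms by (simp add: box_def)
  finally show ?thesis .
qed

lemma box_U: "F \<in> box G \<Longrightarrow> \<Union>F \<subseteq> U" by (auto simp: box_def EU_def)

lemma inU: assumes "v \<in> U" obtains j where "j \<in> {1..m}" "v \<in> I j" using assms U_def by auto

definition "AA G i0 X = {F \<in> box G. \<Union>F \<inter> I i0 = X}"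

context
  fixes G :: "nat set set" and i0 :: nat and W W' :: "nat set"
  assumes i0: "i0 \<in> {1..m}" and WJ: "W \<subseteq> I i0" and W'J: "W' \<subseteq> I i0" and cW: "card W = card W'"
begin


lemma finW: "finite W" "finite W'" using finI[OF i0] WJ W'J finite_subset by auto

abbreviation "\<psi> \<equiv> sw W W'"
abbreviation "\<psi>' \<equiv> sw W' W"

lemma psi_props:
  assumes F: "F \<in> AA G i0 W"
  shows "(`) \<psi> ` F \<in> AA G i0 W'" and "(`) \<psi>' ` ((`) \<psi> ` F) = F"
    and "coef ((`) \<psi> ` F) mod 2^k = coef F mod 2^k"
proof -
  have FU: "\<Union>F \<subseteq> U" and FW: "\<Union>F \<inter> I i0 = W" and Fb: "F \<in> box G"
    using F box_U by (auto simp: AA_def)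
  have b1: "\<psi> v \<in> W'" if "v \<in> W" for v using sw_in finW cW that by blast
  have b2: "v \<notin> I i0" "\<psi> v = v" if "v \<in> \<Union>F" "v \<notin> W" for v
    using that FW sw_out[OF finW cW] by auto
  have c: "\<psi> v \<in> I i \<longleftrightarrow> v \<in> I i" if "v \<in> \<Union>F" "i \<in> {1..m}" for v i
  proof (cases "v \<in> W")
    case True
    then have "v \<in> I i0" "\<psi> v \<in> I i0" using b1 WJ W'J by auto
    then show ?thesis using disj[OF that(2) i0] by (cases "i = i0") auto
  next
    case False then show ?thesis using b2 that by simp
  qed
  have d: "strict_mono_on (\<Union>F) \<psi>"
  proof (rule strict_mono_onI)
    fix u v assume uv: "u \<in> \<Union>F" "v \<in> \<Union>F" "u < v"
    show "\<psi> u < \<psi> v"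
    proof (cases "u \<in> W"; cases "v \<in> W")
      assume "u \<in> W" "v \<in> W"
      then show ?thesis using sw_mono[OF finW cW] uv by (simp add: strict_mono_on_def)
    next
      assume "u \<notin> W" "v \<notin> W"
      then show ?thesis using b2 uv by simp
    next
      assume u: "u \<in> W" and v: "v \<notin> W"
      obtain j where j: "j \<in> {1..m}" "v \<in> I j" using inU uv FU by blast
      have "j \<noteq> i0" using b2[OF uv(2) v] j by auto
      have "\<not> j < i0" using ord[OF j(1) i0 _ j(2)] u WJ uv by force
      then have "i0 < j" using \<open>j \<noteq> i0\<close> by simp
      then show ?thesis using ord[OF i0 j(1) _ _ j(2)] b1[OF u] W'J b2[OF uv(2) v] by auto
    next
      assume u: "u \<notin> W" and v: "v \<in> W"
      obtain j where j: "j \<in> {1..m}" "u \<in> I j" using inU uv FU by blast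
      have "j \<noteq> i0" using b2[OF uv(1) u] j by auto
      have "\<not> i0 < j" using ord[OF i0 j(1) _ _ j(2)] v WJ uv by force
      then have "j < i0" using \<open>j \<noteq> i0\<close> by simp
      then show ?thesis using ord[OF j(1) i0 _ j(2)] b1[OF v] W'J b2[OF uv(1) u] by auto
    qed
  qed
  have e: "\<psi> ` \<Union>F \<subseteq> U"
  proof
    fix w assume "w \<in> \<psi> ` \<Union>F"
    then obtain v where v: "v \<in> \<Union>F" "w = \<psi> v" by auto
    show "w \<in> U"
    proof (cases "v \<in> W")
      case True then show ?thesis using v b1[OF True] W'J i0 U_def by blast
    next
      case False then show ?thesis using v b2 FU by auto
    qed
  qed
  have inj: "inj_on \<psi> (\<Union>F)" using d strict_mono_on_imp_inj_on by blast
  have Usub: "U \<subseteq> {1..n}" using US Sn by simp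
  have qm: "qmap (\<psi> ` p) = qmap p" if "p \<in> F" for p
    unfolding qmap_def using c that by fastforce
  show g: "(`) \<psi> ` F \<in> AA G i0 W'"
  proof -
    have "(`) \<psi> ` F \<subseteq> EU"
    proof
      fix p' assume "p' \<in> (`) \<psi> ` F"
      then obtain p where p: "p \<in> F" "p' = \<psi> ` p" by auto
      have pe: "p \<in> edges n" "p \<subseteq> U" using p Fb by (auto simp: box_def EU_def)
      have "card p' = card p" using p inj by (metis Union_upper card_image inj_on_subset)
      moreover have "p' \<subseteq> U" using p e by auto
      moreover have "finite p" using pe unfolding edges_def by (auto intro: finite_subset)
      ultimately show "p' \<in> EU" using pe Usub p unfolding EU_def edges_def by auto
    qed
    moreover have "card ((`) \<psi> ` F) = card F" using inj_on_image[OF inj] card_image by blast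
    moreover have "qmap ` ((`) \<psi> ` F) = qmap ` F" using qm by (auto simp: image_image cong: image_cong)
    moreover have "\<Union>((`) \<psi> ` F) \<inter> I i0 = W'"
    proof -
      have "\<Union>((`) \<psi> ` F) = \<psi> ` \<Union>F" by auto
      also have "\<dots> \<inter> I i0 = \<psi> ` W"
        using c[OF _ i0] FW by blast
      also have "\<dots> = W'" using sw_image[OF finW cW] .
      finally show ?thesis .
    qed
    ultimately show ?thesis using Fb by (auto simp: AA_def box_def)
  qed
  have hinv: "\<psi>' (\<psi> v) = v" if "v \<in> \<Union>F" for v
  proof (cases "v \<in> W")
    case True then show ?thesis using sw_inv[OF finW cW] by simp
  next
    case False
    then have "\<psi> v = v" "v \<notin> W'" using b2[OF that False] W'J by auto
    then show ?thesis using sw_out[OF finW(2,1) cW[symmetric]] by simp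
  qed
  show "(`) \<psi>' ` ((`) \<psi> ` F) = F"
  proof -
    have "\<psi>' ` (\<psi> ` p) = p" if "p \<in> F" for p
      using hinv that by (force simp: image_image)
    then show ?thesis by (simp add: image_image cong: image_cong)
  qed
  show "coef ((`) \<psi> ` F) mod 2^k = coef F mod 2^k"
    by (rule INV) (use FU US box_card[OF Fb] d e in auto)
qed

end

lemma AA_sum_mod:
  assumes i0: "i0 \<in> {1..m}" and WJ: "W \<subseteq> I i0" and W'J: "W' \<subseteq> I i0" and cW: "card W = card W'"
  shows "(\<Sum>F\<in>AA G i0 W. coef F) mod 2^k = (\<Sum>F\<in>AA G i0 W'. coef F) mod 2^k"
proof -
  note P1 = psi_props[OF i0 WJ W'J cW]
  note P2 = psi_props[OF i0 W'J WJ cW[symmetric]]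
  have "(\<Sum>F\<in>AA G i0 W. coef ((`) (sw W W') ` F)) = (\<Sum>F\<in>AA G i0 W'. coef F)"
    by (rule sum.reindex_bij_witness[of _ "\<lambda>F. (`) (sw W' W) ` F" "\<lambda>F. (`) (sw W W') ` F"])
       (use P1 P2 in auto)
  then have "(\<Sum>F\<in>AA G i0 W'. coef F) mod 2^k = (\<Sum>F\<in>AA G i0 W. coef ((`) (sw W W') ` F) mod 2^k) mod 2^k"
    by (simp add: mod_sum_eq)
  also have "\<dots> = (\<Sum>F\<in>AA G i0 W. coef F mod 2^k) mod 2^k"
    using P1(3) by (simp cong: sum.cong)
  also have "\<dots> = (\<Sum>F\<in>AA G i0 W. coef F) mod 2^k" by (simp add: mod_sum_eq)
  finally show ?thesis by simp
qed

lemma box_dvd: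
  assumes G: "G \<noteq> {}" "G \<subseteq> edges m"
  shows "(\<Sum>F\<in>box G. coef F) mod 2^k = 0"
proof -
  obtain q i0 where q: "q \<in> G" "i0 \<in> q" using G edges_def by fastforce
  have i0: "i0 \<in> {1..m}" using q G unfolding edges_def by blast
  define J where "J = I i0"
  have finJ: "finite J" and cJ: "card J = s" using finI[OF i0] cardI[OF i0] J_def by auto
  have meet: "\<Union>F \<inter> J \<noteq> {}" if "F \<in> box G" for F
  proof -
    have "q \<in> qmap ` F" using that q by (auto simp: box_def)
    then obtain p where "p \<in> F" "q = qmap p" by auto
    then show ?thesis using q J_def by (auto simp: qmap_def)
  qed
  define T where "T W = (\<Sum>F\<in>AA G i0 W. coef F)" for W
  have S1: "(\<Sum>F\<in>box G. coef F) = (\<Sum>W\<in>Pow J. T W)"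
    unfolding T_def AA_def J_def
    by (rule sum.group[symmetric]) (auto simp: finbox finJ[unfolded J_def])
  have S2: "(\<Sum>W\<in>Pow J. T W) = (\<Sum>r\<in>{..s}. \<Sum>W\<in>{W\<in>Pow J. card W = r}. T W)"
    by (rule sum.group[symmetric]) (use finJ cJ in \<open>auto intro: card_mono\<close>)
  have Xr: "(\<Sum>W\<in>{W\<in>Pow J. card W = r}. T W) mod 2^k = 0" for r
  proof (cases "1 \<le> r \<and> r \<le> 2*d")
    case False
    have "T W = 0" if "W \<in> {W\<in>Pow J. card W = r}" for W
    proof -
      have "AA G i0 W = {}"
      proof (rule ccontr)
        assume "AA G i0 W \<noteq> {}"
        then obtain F where F: "F \<in> box G" "\<Union>F \<inter> J = W" by (auto simp: AA_def J_def)
        have "W \<noteq> {}" using meet F by auto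
        moreover have "finite W" using that finJ by (auto intro: finite_subset)
        ultimately have "r \<noteq> 0" using that by auto
        moreover have "card W \<le> card (\<Union>F)"
          using F box_U[OF F(1)] US Sn by (intro card_mono) (auto intro: finite_subset)
        ultimately show False using False box_card[OF F(1)] that by auto
      qed
      then show ?thesis by (simp add: T_def)
    qed
    then show ?thesis by simp
  next
    case True
    show ?thesis
    proof (cases "{W\<in>Pow J. card W = r} = {}")
      case True then show ?thesis by (simp only: True sum.empty) simp
    next
      case False
      then obtain W0 where W0: "W0 \<subseteq> J" "card W0 = r" by auto
      have "(\<Sum>W\<in>{W\<in>Pow J. card W = r}. T W) mod 2^k = (\<Sum>W\<in>{W\<in>Pow J. card W = r}. T W mod 2^k) mod 2^k"
        by (simp add: mod_sum_eq)
      also have "\<dots> = (\<Sum>W\<in>{W\<in>Pow J. card W = r}. T W0 mod 2^k) mod 2^k"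
      proof (rule arg_cong[where f="\<lambda>x. x mod 2^k"], rule sum.cong[OF refl])
        fix W assume W: "W \<in> {W\<in>Pow J. card W = r}"
        have "W \<subseteq> I i0" "W0 \<subseteq> I i0" "card W = card W0" using W W0 J_def by auto
        from AA_sum_mod[OF i0 this] show "T W mod 2^k = T W0 mod 2^k" unfolding T_def .
      qed
      also have "\<dots> = (int (card {W\<in>Pow J. card W = r}) * (T W0 mod 2^k)) mod 2^k" by simp
      also have "card {W\<in>Pow J. card W = r} = s choose r"
      proof -
        have "{W\<in>Pow J. card W = r} = nsets J r" using finJ by (auto simp: nsets_def intro: finite_subset)
        then show ?thesis using cJ by simp
      qed
      also have "(int (s choose r) * (T W0 mod 2^k)) mod 2^k = 0"
      proof -
        obtain c where "int (s choose r) = 2^k * c" using binom True by (meson dvdE)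
        then show ?thesis by simp
      qed
      finally show ?thesis .
    qed
  qed
  have "(\<Sum>F\<in>box G. coef F) mod 2^k = (\<Sum>r\<in>{..s}. (\<Sum>W\<in>{W\<in>Pow J. card W = r}. T W) mod 2^k) mod 2^k"
    unfolding S1 S2 by (simp add: mod_sum_eq)
  also have "\<dots> = 0" using Xr by simp
  finally show ?thesis .
qed

end



lemma prod_image_idem:
  fixes h :: "'b \<Rightarrow> int"
  assumes "finite A" "\<And>q. h q = 0 \<or> h q = 1"
  shows "(\<Prod>p\<in>A. h (g p)) = (\<Prod>q\<in>g ` A. h q)"
  using assms(1)
proof (induction A rule: finite_induct)
  case empty then show ?case by simp
next
  case (insert a A)
  show ?case
  proof (cases "g a \<in> g ` A")
    case True
    have fin: "finite (g ` A)" using insert by simp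
    have "(\<Prod>q\<in>g ` A. h q) = h (g a) * (\<Prod>q\<in>g ` A - {g a}. h q)"
      using prod.remove[OF fin True] by simp
    then have "h (g a) * (\<Prod>q\<in>g ` A. h q) = (\<Prod>q\<in>g ` A. h q)"
      using assms(2)[of "g a"] by auto
    then show ?thesis using insert True by (simp add: insert_absorb)
  next
    case False
    then show ?thesis using insert by simp
  qed
qed

context boxsetup
begin

lemma qmap_edges:
  assumes p: "p \<in> edges n" "p \<subseteq> U"
  shows "qmap p \<in> edges m"
proof -
  define g where "g v = (SOME i. i \<in> {1..m} \<and> v \<in> I i)" for v
  have g: "g v \<in> {1..m} \<and> v \<in> I (g v)" if "v \<in> U" for v
    unfolding g_def by (rule someI_ex) (use that U_def in auto)
  have "qmap p \<subseteq> g ` p"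
  proof
    fix i assume "i \<in> qmap p"
    then obtain v where v: "v \<in> p" "v \<in> I i" "i \<in> {1..m}" by (auto simp: qmap_def)
    then have "g v = i" using g[of v] p disj by blast
    then show "i \<in> g ` p" using v by auto
  qed
  moreover have "finite p" using p by (auto simp: edges_def intro: finite_subset)
  ultimately have "card (qmap p) \<le> card p" by (meson card_image_le card_mono finite_imageI le_trans)
  moreover have "qmap p \<noteq> {}"
  proof -
    obtain v where "v \<in> p" using p by (auto simp: edges_def)
    then show ?thesis using g[of v] p by (auto simp: qmap_def)
  qed
  ultimately show ?thesis using p by (auto simp: edges_def qmap_def)
qed

lemma bq_iff:
  assumes p: "p \<in> edges n" and q: "q \<in> edges m"
  shows "bq n I q p \<longleftrightarrow> p \<subseteq> U \<and> q = qmap p"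
proof
  assume b: "bq n I q p"
  have qm: "q \<subseteq> {1..m}" using q by (auto simp: edges_def)
  have "p \<subseteq> U" using b qm unfolding bq_def U_def by blast
  moreover have "q = qmap p"
  proof
    show "q \<subseteq> qmap p" using b qm by (auto simp: bq_def qmap_def)
    show "qmap p \<subseteq> q"
    proof
      fix i assume "i \<in> qmap p"
      then obtain v where v: "v \<in> p" "v \<in> I i" "i \<in> {1..m}" by (auto simp: qmap_def)
      then obtain j where j: "j \<in> q" "v \<in> I j" using b by (auto simp: bq_def)
      then have "j \<in> {1..m}" using qm by auto
      then show "i \<in> q" using disj[of i j] v j by blast
    qed
  qed
  ultimately show "p \<subseteq> U \<and> q = qmap p" by simp
next
  assume "p \<subseteq> U \<and> q = qmap p"
  then have pU: "p \<subseteq> U" and qd: "q = qmap p" by auto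
  have "p \<subseteq> (\<Union>i\<in>q. I i)"
  proof
    fix v assume v: "v \<in> p"
    then obtain j where "j \<in> {1..m}" "v \<in> I j" using pU U_def by auto
    then show "v \<in> (\<Union>i\<in>q. I i)" using v qd by (auto simp: qmap_def)
  qed
  then show "bq n I q p" using p qd by (auto simp: bq_def qmap_def)
qed

lemma emb_val:
  assumes c: "shift_ok n m I c" and p: "p \<in> edges n"
  shows "hj_emb n m I c x p = (if p \<subseteq> U then x (qmap p) else c p)"
proof -
  have set: "{q\<in>edges m. x q \<and> bq n I q p} = (if p \<subseteq> U \<and> x (qmap p) then {qmap p} else {})"
    using bq_iff[OF p] qmap_edges[OF p] by auto
  have cU: "p \<subseteq> U \<Longrightarrow> \<not> c p" using c p by (auto simp: shift_ok_def U_def edges_def)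
  show ?thesis using set cU by (auto simp: hj_emb_def IdI_def)
qed

lemma emb_cube:
  assumes c: "shift_ok n m I c"
  shows "hj_emb n m I c x \<in> cube n"
  unfolding cube_def mem_Collect_eq
proof (intro allI impI)
  fix p assume h: "hj_emb n m I c x p"
  show "p \<in> edges n"
  proof (cases "c p")
    case True then show ?thesis using c by (auto simp: shift_ok_def cube_def)
  next
    case False
    then have "odd (card {q\<in>edges m. x q \<and> bq n I q p})" using h by (simp add: hj_emb_def IdI_def)
    then have "{q\<in>edges m. x q \<and> bq n I q p} \<noteq> {}" by (metis card.empty even_zero)
    then show ?thesis by (auto simp: bq_def)
  qed
qed

lemma poly_drop:
  assumes d0: "d > 0" and c: "shift_ok n m I c"
  and Qrep: "\<forall>x\<in>cube n. Q x = (\<alpha> + (\<Sum>F\<in>{F. F \<subseteq> edges n \<and> F \<noteq> {} \<and> card F \<le> d}.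
              coef F * (\<Prod>e\<in>F. if x e then 1 else 0))) mod 2^k"
  shows "kpoly_le k m (d - 1) (Q \<circ> hj_emb n m I c)"
proof -
  define Dn where "Dn = {F. F \<subseteq> edges n \<and> F \<noteq> {} \<and> card F \<le> d}"
  define F1 where "F1 F = {p\<in>F. p \<subseteq> U}" for F :: "nat set set"
  define w where "w F = (\<Prod>p\<in>F - F1 F. if c p then 1 else 0::int)" for F
  define qm where "qm F = qmap ` F1 F" for F
  define Gm where "Gm = {G. G \<subseteq> edges m \<and> card G \<le> d}"
  define a where "a G = (\<Sum>F\<in>{F\<in>Dn. qm F = G}. coef F * w F)" for G
  define Dm where "Dm = {G. G \<subseteq> edges m \<and> G \<noteq> {} \<and> card G \<le> d - 1}"
  define Gd where "Gd = {G. G \<subseteq> edges m \<and> card G = d}"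
  have finDn: "finite Dn" unfolding Dn_def
    by (rule finite_subset[of _ "Pow (edges n)"]) (auto simp: finite_edges)
  have finGm: "finite Gm" unfolding Gm_def
    by (rule finite_subset[of _ "Pow (edges m)"]) (auto simp: finite_edges)
  have finF: "finite F" if "F \<in> Dn" for F
    using that finite_edges finite_subset by (auto simp: Dn_def)
  have qmGm: "qm F \<in> Gm" if "F \<in> Dn" for F
  proof -
    have "qm F \<subseteq> edges m" using that qmap_edges by (auto simp: qm_def F1_def Dn_def)
    moreover have "card (qm F) \<le> d"
    proof -
      have "card (qm F) \<le> card (F1 F)" unfolding qm_def by (rule card_image_le) (use finF[OF that] in \<open>simp add: F1_def\<close>)
      also have "\<dots> \<le> card F" by (rule card_mono) (use finF[OF that] in \<open>auto simp: F1_def\<close>)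
      finally show ?thesis using that by (simp add: Dn_def)
    qed
    ultimately show ?thesis by (simp add: Gm_def)
  qed
  have boxeq: "{F\<in>Dn. qm F = G} = box G" and w1: "\<forall>F\<in>box G. w F = 1" if G: "G \<in> Gd" for G
  proof -
    have "F \<in> box G \<and> F1 F = F" if F: "F \<in> Dn" "qm F = G" for F
    proof -
      have fin: "finite F" using finF F by simp
      have "d \<le> card (F1 F)"
        using G F card_image_le[of "F1 F" qmap] fin by (auto simp: Gd_def qm_def F1_def)
      moreover have "F1 F \<subseteq> F" by (auto simp: F1_def)
      moreover have "card F \<le> d" using F by (simp add: Dn_def)
      ultimately have eq: "F1 F = F" and cF: "card F = d"
        using card_mono[OF fin, of "F1 F"] card_subset_eq[OF fin, of "F1 F"] by auto
      have "F \<subseteq> EU" using eq F by (auto simp: F1_def EU_def Dn_def)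
      then show ?thesis using eq cF F by (auto simp: box_def qm_def)
    qed
    moreover have "F \<in> Dn \<and> qm F = G \<and> F1 F = F" if F: "F \<in> box G" for F
    proof -
      have "F1 F = F" using F by (auto simp: box_def F1_def EU_def)
      moreover have "F \<noteq> {}" using F d0 by (auto simp: box_def)
      ultimately show ?thesis using F by (auto simp: box_def Dn_def EU_def qm_def)
    qed
    ultimately show "{F\<in>Dn. qm F = G} = box G" "\<forall>F\<in>box G. w F = 1"
      by (auto simp: w_def)
  qed
  have aGd: "a G mod 2^k = 0" if "G \<in> Gd" for G
  proof -
    have "a G = (\<Sum>F\<in>box G. coef F)" unfolding a_def using boxeq[OF that] w1[OF that] by simp
    moreover have "G \<noteq> {}" "G \<subseteq> edges m" using that d0 by (auto simp: Gd_def)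
    ultimately show ?thesis using box_dvd by simp
  qed
  have Gm_split: "Gm = insert {} (Dm \<union> Gd)" and disj1: "{} \<notin> Dm \<union> Gd" and disj2: "Dm \<inter> Gd = {}"
    using d0 by (auto simp: Gm_def Dm_def Gd_def)
  have finDm: "finite Dm" "finite Gd" using finGm Gm_split by (auto intro: finite_subset)
  show ?thesis unfolding kpoly_le_def
  proof (intro exI ballI)
    fix x assume x: "x \<in> cube m"
    define y where "y = hj_emb n m I c x"
    define mono where "mono G = (\<Prod>q\<in>G. if x q then 1 else 0::int)" for G
    have ycube: "y \<in> cube n" using emb_cube[OF c] y_def by simp
    have prodF: "(\<Prod>p\<in>F. if y p then 1 else 0::int) = w F * mono (qm F)" if F: "F \<in> Dn" for F
    proof -
      have fin: "finite F" using finF F by simp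
      have "(\<Prod>p\<in>F. if y p then 1 else 0::int) = (\<Prod>p\<in>F1 F. if y p then 1 else 0) * (\<Prod>p\<in>F - F1 F. if y p then 1 else 0)"
        using prod.subset_diff[of "F1 F" F] fin by (auto simp: F1_def mult.commute)
      also have "(\<Prod>p\<in>F - F1 F. if y p then 1 else 0::int) = w F"
        unfolding w_def
      proof (rule prod.cong[OF refl])
        fix p assume p: "p \<in> F - F1 F"
        then have "p \<in> edges n" "\<not> p \<subseteq> U" using F by (auto simp: F1_def Dn_def)
        then show "(if y p then 1 else 0::int) = (if c p then 1 else 0)" using emb_val[OF c] y_def by simp
      qed
      also have "(\<Prod>p\<in>F1 F. if y p then 1 else 0::int) = (\<Prod>p\<in>F1 F. if x (qmap p) then 1 else 0)"
        by (rule prod.cong[OF refl]) (use F emb_val[OF c] in \<open>auto simp: y_def F1_def Dn_def\<close>)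
      also have "\<dots> = mono (qm F)"
        unfolding mono_def qm_def using prod_image_idem[of "F1 F" "\<lambda>q. if x q then 1 else 0" qmap] fin
        by (simp add: F1_def)
      finally show ?thesis by simp
    qed
    have "(\<Sum>F\<in>Dn. coef F * (\<Prod>p\<in>F. if y p then 1 else 0)) = (\<Sum>F\<in>Dn. coef F * w F * mono (qm F))"
      using prodF by (simp add: mult.assoc)
    also have "\<dots> = (\<Sum>G\<in>Gm. \<Sum>F\<in>{F\<in>Dn. qm F = G}. coef F * w F * mono (qm F))"
      by (rule sum.group[symmetric]) (use finDn finGm qmGm in auto)
    also have "\<dots> = (\<Sum>G\<in>Gm. a G * mono G)"
      unfolding a_def by (auto simp: sum_distrib_right intro!: sum.cong)
    also have "\<dots> = a {} * mono {} + ((\<Sum>G\<in>Dm. a G * mono G) + (\<Sum>G\<in>Gd. a G * mono G))"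
      unfolding Gm_split using disj1 disj2 finDm by (simp add: sum.union_disjoint)
    finally have eq: "(\<Sum>F\<in>Dn. coef F * (\<Prod>p\<in>F. if y p then 1 else 0)) =
       a {} + (\<Sum>G\<in>Dm. a G * mono G) + (\<Sum>G\<in>Gd. a G * mono G)" by (simp add: mono_def)
    have dvd: "(2::int)^k dvd (\<Sum>G\<in>Gd. a G * mono G)"
      by (rule dvd_sum) (use aGd in \<open>auto simp: mod_eq_0_iff_dvd\<close>)
    have "(Q \<circ> hj_emb n m I c) x = Q y" by (simp add: y_def)
    also have "\<dots> = (\<alpha> + (\<Sum>F\<in>Dn. coef F * (\<Prod>p\<in>F. if y p then 1 else 0))) mod 2^k"
      using Qrep ycube by (simp add: Dn_def)
    also have "\<dots> = ((\<alpha> + a {} + (\<Sum>G\<in>Dm. a G * mono G)) + (\<Sum>G\<in>Gd. a G * mono G)) mod 2^k"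
      unfolding eq by (simp add: algebra_simps)
    also have "\<dots> = (\<alpha> + a {} + (\<Sum>G\<in>Dm. a G * mono G)) mod 2^k"
      using dvd by (auto elim!: dvdE)
    finally show "(Q \<circ> hj_emb n m I c) x = (\<alpha> + a {} + (\<Sum>F\<in>{F. F \<subseteq> edges m \<and> F \<noteq> {} \<and> card F \<le> d - 1}.
              a F * (\<Prod>e\<in>F. if x e then 1 else 0))) mod 2^k"
      by (simp add: Dm_def mono_def)
  qed
qed

end



lemma finite_cube: "finite (cube n)"
proof -
  have "inj_on (\<lambda>y. {p. y p}) (cube n)" by (auto simp: inj_on_def fun_eq_iff)
  moreover have "(\<lambda>y. {p. y p}) ` cube n \<subseteq> Pow (edges n)" by (auto simp: cube_def)
  ultimately show ?thesis using finite_edges by (meson finite_Pow_iff finite_imageD finite_subset)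
qed

lemma cube_nonempty: "(\<lambda>_. False) \<in> cube n" by (simp add: cube_def)

lemma card_cube_pos: "card (cube n) > 0"
  using finite_cube cube_nonempty card_gt_0_iff by blast

lemma cube_empty: "y \<in> cube n \<Longrightarrow> \<not> y {}" by (auto simp: cube_def edges_def)

lemma IdI_sub: "IdI n m I x p \<Longrightarrow> p \<subseteq> (\<Union>i\<in>{1..m}. I i)"
proof -
  assume "IdI n m I x p"
  then have "{q\<in>edges m. x q \<and> bq n I q p} \<noteq> {}" unfolding IdI_def by (metis card.empty even_zero)
  then obtain q where "q \<in> edges m" "bq n I q p" by auto
  then show ?thesis unfolding edges_def bq_def by blast
qed

context
  fixes n m T L :: nat and J :: "nat \<Rightarrow> nat \<Rightarrow> nat set"
begin

definition "UU t = (\<Union>i\<in>{1..m}. J t i)"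
definition "cc t y = (\<lambda>p. y p \<and> \<not> p \<subseteq> UU t)"
definition "good t y \<longleftrightarrow> y \<in> hj_space n m (J t) (cc t y)"
definition "BB j = {y\<in>cube n. \<forall>t<j. \<not> good t y}"

lemma shift_cc: "y \<in> cube n \<Longrightarrow> shift_ok n m (J t) (cc t y)"
  by (auto simp: shift_ok_def cc_def cube_def UU_def)

lemma emb_out: "\<not> p \<subseteq> UU t \<Longrightarrow> hj_emb n m (J t) c x p = c p"
  using IdI_sub[of n m "J t" x p] by (auto simp: hj_emb_def UU_def)

lemma emb_in: "p \<subseteq> UU t \<Longrightarrow> hj_emb n m (J t) (cc t y) x p = IdI n m (J t) x p"
  by (auto simp: hj_emb_def cc_def)

lemma good_iff:
  assumes "y \<in> cube n"
  shows "good t y \<longleftrightarrow> (\<exists>x\<in>cube m. \<forall>p. p \<subseteq> UU t \<longrightarrow> y p = IdI n m (J t) x p)"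
proof
  assume "good t y"
  then obtain x where x: "x \<in> cube m" "y = hj_emb n m (J t) (cc t y) x" by (auto simp: good_def hj_space_def)
  then show "\<exists>x\<in>cube m. \<forall>p. p \<subseteq> UU t \<longrightarrow> y p = IdI n m (J t) x p" using emb_in by metis
next
  assume "\<exists>x\<in>cube m. \<forall>p. p \<subseteq> UU t \<longrightarrow> y p = IdI n m (J t) x p"
  then obtain x where x: "x \<in> cube m" "\<forall>p. p \<subseteq> UU t \<longrightarrow> y p = IdI n m (J t) x p" by blast
  have "y = hj_emb n m (J t) (cc t y) x"
  proof
    fix p show "y p = hj_emb n m (J t) (cc t y) x p"
      using x emb_in[of p t y x] emb_out[of p t "cc t y" x] by (cases "p \<subseteq> UU t") (auto simp: cc_def)
  qed
  then show "good t y" using x by (auto simp: good_def hj_space_def)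
qed

lemma good_cong:
  assumes "y \<in> cube n" "y' \<in> cube n" "\<forall>p. p \<subseteq> UU t \<longrightarrow> y p = y' p"
  shows "good t y \<longleftrightarrow> good t y'"
  using assms good_iff by simp

lemma good_zero:
  assumes "y \<in> cube n" "\<forall>p. p \<subseteq> UU t \<longrightarrow> \<not> y p"
  shows "good t y"
proof -
  have "\<not> IdI n m (J t) (\<lambda>_. False) p" for p by (simp add: IdI_def)
  then show ?thesis using assms good_iff[of y t] cube_nonempty[of m] by auto
qed

lemma space_props:
  assumes y: "y \<in> cube n" and z: "z \<in> hj_space n m (J t) (cc t y)"
  shows "z \<in> cube n" "\<forall>p. \<not> p \<subseteq> UU t \<longrightarrow> z p = y p" "good t z" "cc t z = cc t y"
proof -
  obtain x where x: "x \<in> cube m" "z = hj_emb n m (J t) (cc t y) x" using z by (auto simp: hj_space_def)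
  have sh: "shift_ok n m (J t) (cc t y)" using shift_cc y by blast
  show zc: "z \<in> cube n"
    unfolding cube_def mem_Collect_eq
  proof (intro allI impI)
    fix p assume zp: "z p"
    show "p \<in> edges n"
    proof (cases "p \<subseteq> UU t")
      case True
      then have "IdI n m (J t) x p" using zp x emb_in by simp
      then have "{q\<in>edges m. x q \<and> bq n (J t) q p} \<noteq> {}" unfolding IdI_def by (metis card.empty even_zero)
      then show ?thesis by (auto simp: bq_def)
    next
      case False
      then show ?thesis using zp x emb_out y by (auto simp: cc_def cube_def)
    qed
  qed
  show out: "\<forall>p. \<not> p \<subseteq> UU t \<longrightarrow> z p = y p" using x emb_out by (auto simp: cc_def)
  show "good t z" using good_iff[OF zc] x emb_in by metis
  show "cc t z = cc t y" using out by (auto simp: cc_def fun_eq_iff)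
qed

lemma BB_Suc: "BB (Suc j) = BB j - {y. good j y}"
  by (auto simp: BB_def less_Suc_eq)

lemma BB_step:
  assumes dj: "\<And>t. t < j \<Longrightarrow> UU t \<inter> UU j = {}" and fin: "finite (UU j)" and cL: "card (UU j) \<le> L"
  shows "real (card (BB (Suc j))) \<le> (1 - 1/2^(2^L)) * real (card (BB j))"
proof -
  define \<psi> where "\<psi> y = (\<lambda>p. y p \<and> \<not> p \<subseteq> UU j)" for y :: "nat set \<Rightarrow> bool"
  define Gd where "Gd = BB j \<inter> {y. good j y}"
  define K :: nat where "K = 2^(2^L)"
  have finB: "finite (BB j)" using finite_cube by (auto simp: BB_def)
  have psi_in: "\<psi> ` BB j \<subseteq> Gd"
  proof
    fix z assume "z \<in> \<psi> ` BB j"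
    then obtain y where y: "y \<in> BB j" "z = \<psi> y" by auto
    have yc: "y \<in> cube n" using y by (simp add: BB_def)
    have zc: "z \<in> cube n" using yc y by (auto simp: cube_def \<psi>_def)
    have "\<not> good t z" if t: "t < j" for t
    proof -
      have "\<forall>p. p \<subseteq> UU t \<longrightarrow> z p = y p"
      proof (intro allI impI)
        fix p assume p: "p \<subseteq> UU t"
        show "z p = y p"
        proof (cases "p = {}")
          case True then show ?thesis using cube_empty[OF yc] cube_empty[OF zc] by simp
        next
          case False
          then have "\<not> p \<subseteq> UU j" using p dj[OF t] by blast
          then show ?thesis using y by (simp add: \<psi>_def)
        qed
      qed
      then have "good t z \<longleftrightarrow> good t y" using good_cong[OF zc yc] by blast
      then show ?thesis using y t by (auto simp: BB_def)
    qed
    moreover have "good j z" by (rule good_zero[OF zc]) (use y in \<open>auto simp: \<psi>_def\<close>)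
    ultimately show "z \<in> Gd" using zc by (auto simp: Gd_def BB_def)
  qed
  define E where "E = {p\<in>edges n. p \<subseteq> UU j}"
  have finE: "finite E" using finite_edges by (simp add: E_def)
  have cE: "card E \<le> 2^L"
  proof -
    have "card E \<le> card (Pow (UU j))" by (rule card_mono) (use fin in \<open>auto simp: E_def\<close>)
    also have "\<dots> = 2^card (UU j)" using fin by (simp add: card_Pow)
    also have "\<dots> \<le> 2^L" using cL by (simp add: power_increasing)
    finally show ?thesis .
  qed
  have fib: "card {y\<in>BB j. \<psi> y = z} \<le> K" for z
  proof -
    have "inj_on (\<lambda>y. {p\<in>E. y p}) {y\<in>BB j. \<psi> y = z}"
    proof (rule inj_onI)
      fix y y' assume y: "y \<in> {y\<in>BB j. \<psi> y = z}" and y': "y' \<in> {y\<in>BB j. \<psi> y = z}"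
        and eq: "{p\<in>E. y p} = {p\<in>E. y' p}"
      show "y = y'"
      proof
        fix p
        show "y p = y' p"
        proof (cases "p \<subseteq> UU j")
          case False then show ?thesis using y y' by (auto simp: \<psi>_def fun_eq_iff)
        next
          case True
          show ?thesis
          proof (cases "p \<in> edges n")
            case True' : True
            then show ?thesis using eq \<open>p \<subseteq> UU j\<close> by (auto simp: E_def set_eq_iff)
          next
            case False
            then show ?thesis using y y' by (auto simp: BB_def cube_def)
          qed
        qed
      qed
    qed
    moreover have "(\<lambda>y. {p\<in>E. y p}) ` {y\<in>BB j. \<psi> y = z} \<subseteq> Pow E" by auto
    ultimately have "card {y\<in>BB j. \<psi> y = z} \<le> card (Pow E)"
      using finE by (meson card_inj_on_le finite_Pow_iff)
    also have "\<dots> = 2^card E" using finE by (simp add: card_Pow)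
    also have "\<dots> \<le> K" unfolding K_def using cE by (simp add: power_increasing)
    finally show ?thesis .
  qed
  have "card (BB j) \<le> card (\<Union>z\<in>\<psi> ` BB j. {y\<in>BB j. \<psi> y = z})"
    by (rule card_mono) (use finB in auto)
  also have "\<dots> \<le> (\<Sum>z\<in>\<psi> ` BB j. card {y\<in>BB j. \<psi> y = z})"
    by (rule card_UN_le) (use finB in simp)
  also have "\<dots> \<le> (\<Sum>z\<in>\<psi> ` BB j. K)" by (rule sum_mono) (use fib in simp)
  also have "\<dots> = card (\<psi> ` BB j) * K" by simp
  also have "\<dots> \<le> card Gd * K"
    using psi_in finB by (intro mult_right_mono card_mono) (auto simp: Gd_def)
  finally have main: "card (BB j) \<le> card Gd * K" .
  have cS: "card (BB (Suc j)) = card (BB j) - card Gd"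
    unfolding BB_Suc Gd_def by (rule card_Diff_subset_Int) (use finB in simp)
  have Gle: "card Gd \<le> card (BB j)" using finB by (auto simp: Gd_def intro: card_mono)
  have Kpos: "real K > 0" by (simp add: K_def)
  have m'': "real (card (BB j)) \<le> real (card Gd * K)" using main by (simp only: of_nat_le_iff)
  have m': "real (card (BB j)) \<le> real (card Gd) * real K" using m'' by simp
  have dv: "real (card (BB j)) / real K \<le> real (card Gd)" using m' Kpos by (simp add: pos_divide_le_eq)
  have "real (card (BB (Suc j))) = real (card (BB j)) - real (card Gd)" using cS Gle by simp
  also have "\<dots> \<le> real (card (BB j)) - real (card (BB j)) / real K"
    using dv by linarith
  also have "\<dots> = (1 - 1/2^(2^L)) * real (card (BB j))" by (simp add: K_def algebra_simps)
  finally show ?thesis .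
qed

lemma BB_bound:
  assumes dj: "\<And>t t'. t < T \<Longrightarrow> t' < T \<Longrightarrow> t \<noteq> t' \<Longrightarrow> UU t \<inter> UU t' = {}"
  and fin: "\<And>t. t < T \<Longrightarrow> finite (UU t) \<and> card (UU t) \<le> L"
  shows "j \<le> T \<Longrightarrow> real (card (BB j)) \<le> (1 - 1/2^(2^L))^j * real (card (cube n))"
proof (induction j)
  case 0 then show ?case by (simp add: BB_def)
next
  case (Suc j)
  have "real (card (BB (Suc j))) \<le> (1 - 1/2^(2^L)) * real (card (BB j))"
    by (rule BB_step) (use Suc.prems dj fin in auto)
  also have "\<dots> \<le> (1 - 1/2^(2^L)) * ((1 - 1/2^(2^L))^j * real (card (cube n)))"
    by (rule mult_left_mono) (use Suc in \<open>auto simp: field_simps\<close>)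
  finally show ?case by simp
qed

lemma cover:
  assumes dj: "\<And>t t'. t < T \<Longrightarrow> t' < T \<Longrightarrow> t \<noteq> t' \<Longrightarrow> UU t \<inter> UU t' = {}"
  and fin: "\<And>t. t < T \<Longrightarrow> finite (UU t) \<and> card (UU t) \<le> L"
  shows "\<exists>V. (\<forall>v\<in>V. \<exists>t<T. \<exists>y\<in>cube n. v = (J t, cc t y)) \<and>
     (\<forall>v\<in>V. \<forall>w\<in>V. v \<noteq> w \<longrightarrow> hj_space n m (fst v) (snd v) \<inter> hj_space n m (fst w) (snd w) = {}) \<and>
     real (card (cube n - (\<Union>(I, c)\<in>V. hj_space n m I c))) / real (card (cube n)) \<le> (1 - 1/2^(2^L))^T"
proof -
  define V where "V = {(J t, cc t y) | t y. y \<in> cube n \<and> t < T \<and> good t y \<and> (\<forall>t'<t. \<not> good t' y)}"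
  have first: "t1 = t2" if "z \<in> cube n" "t1 < T" "t2 < T" "good t1 z" "good t2 z"
     "\<forall>t'<t1. \<not> good t' z" "\<forall>t'<t2. \<not> good t' z" for z t1 t2
  proof -
    have "\<not> t1 < t2" using that(4,7) by blast
    moreover have "\<not> t2 < t1" using that(5,6) by blast
    ultimately show ?thesis by simp
  qed
  have transfer: "\<forall>t'<t. \<not> good t' z" "good t z" "cc t z = cc t y"
    if y: "y \<in> cube n" "t < T" "\<forall>t'<t. \<not> good t' y" and z: "z \<in> hj_space n m (J t) (cc t y)" for y t z
  proof -
    note sp = space_props[OF y(1) z]
    show "good t z" "cc t z = cc t y" using sp(3,4) by auto
    show "\<forall>t'<t. \<not> good t' z"
    proof (intro allI impI)
      fix t' assume t': "t' < t"
      have "\<forall>p. p \<subseteq> UU t' \<longrightarrow> z p = y p"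
      proof (intro allI impI)
        fix p assume p: "p \<subseteq> UU t'"
        show "z p = y p"
        proof (cases "p = {}")
          case True then show ?thesis using cube_empty[OF y(1)] cube_empty[OF sp(1)] by simp
        next
          case False
          have "t' < T" "t' \<noteq> t" using t' y(2) by auto
          then have "UU t' \<inter> UU t = {}" using dj y(2) by blast
          then have "\<not> p \<subseteq> UU t" using p False by blast
          then show ?thesis using sp by simp
        qed
      qed
      then show "\<not> good t' z" using good_cong[OF sp(1) y(1)] y t' by blast
    qed
  qed
  have P1: "\<forall>v\<in>V. \<exists>t<T. \<exists>y\<in>cube n. v = (J t, cc t y)" by (auto simp: V_def)
  have P2: "\<forall>v\<in>V. \<forall>w\<in>V. v \<noteq> w \<longrightarrow> hj_space n m (fst v) (snd v) \<inter> hj_space n m (fst w) (snd w) = {}"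
  proof (intro ballI impI)
    fix v w assume v: "v \<in> V" and w: "w \<in> V" and ne: "v \<noteq> w"
    obtain t y where ty: "v = (J t, cc t y)" "y \<in> cube n" "t < T" "good t y" "\<forall>t'<t. \<not> good t' y"
      using v by (auto simp: V_def)
    obtain t2 y2 where ty2: "w = (J t2, cc t2 y2)" "y2 \<in> cube n" "t2 < T" "good t2 y2" "\<forall>t'<t2. \<not> good t' y2"
      using w by (auto simp: V_def)
    show "hj_space n m (fst v) (snd v) \<inter> hj_space n m (fst w) (snd w) = {}"
    proof (rule ccontr)
      assume "hj_space n m (fst v) (snd v) \<inter> hj_space n m (fst w) (snd w) \<noteq> {}"
      then obtain z where "z \<in> hj_space n m (fst v) (snd v)" "z \<in> hj_space n m (fst w) (snd w)" by blast
      then have z1: "z \<in> hj_space n m (J t) (cc t y)" and z2: "z \<in> hj_space n m (J t2) (cc t2 y2)"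
        using ty(1) ty2(1) by simp_all
      note T1 = transfer[OF ty(2,3,5) z1] and T2 = transfer[OF ty2(2,3,5) z2]
      have zc: "z \<in> cube n" using space_props[OF ty(2) z1] by simp
      have "t = t2" using first[OF zc ty(3) ty2(3)] T1 T2 by blast
      then have "cc t y = cc t2 y2" using T1(3) T2(3) by simp
      then have "v = w" using ty(1) ty2(1) \<open>t = t2\<close> by simp
      then show False using ne by simp
    qed
  qed
  have unc: "cube n - (\<Union>(I, c)\<in>V. hj_space n m I c) \<subseteq> BB T"
  proof
    fix y assume y: "y \<in> cube n - (\<Union>(I, c)\<in>V. hj_space n m I c)"
    show "y \<in> BB T"
    proof (rule ccontr)
      assume "y \<notin> BB T"
      then have ex: "\<exists>t. t < T \<and> good t y" using y by (auto simp: BB_def)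
      define t0 where "t0 = (LEAST t. t < T \<and> good t y)"
      have t0: "t0 < T" "good t0 y" using LeastI_ex[OF ex] t0_def by auto
      have t0m: "\<forall>t'<t0. \<not> good t' y"
      proof (intro allI impI)
        fix t' assume t': "t' < t0"
        then have "\<not> (t' < T \<and> good t' y)" using not_less_Least t0_def by blast
        moreover have "t' < T" using t' t0(1) by simp
        ultimately show "\<not> good t' y" by blast
      qed
      have "(J t0, cc t0 y) \<in> V" using y t0 t0m by (auto simp: V_def)
      moreover have "y \<in> hj_space n m (J t0) (cc t0 y)" using t0 by (simp add: good_def)
      ultimately show False using y by blast
    qed
  qed
  have finBT: "finite (BB T)" using finite_cube by (auto simp: BB_def)
  have "card (cube n - (\<Union>(I, c)\<in>V. hj_space n m I c)) \<le> card (BB T)" by (rule card_mono[OF finBT unc])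
  then have "real (card (cube n - (\<Union>(I, c)\<in>V. hj_space n m I c))) \<le> (1 - 1/2^(2^L))^T * real (card (cube n))"
  proof -
    have "real (card (BB T)) \<le> (1 - 1/2^(2^L))^T * real (card (cube n))" using BB_bound[OF dj fin] by simp
    moreover have "real (card (cube n - (\<Union>(I, c)\<in>V. hj_space n m I c))) \<le> real (card (BB T))"
      using \<open>card (cube n - (\<Union>(I, c)\<in>V. hj_space n m I c)) \<le> card (BB T)\<close> by (simp only: of_nat_le_iff)
    ultimately show ?thesis by linarith
  qed
  then have P3: "real (card (cube n - (\<Union>(I, c)\<in>V. hj_space n m I c))) / real (card (cube n)) \<le> (1 - 1/2^(2^L))^T"
    using card_cube_pos[of n] by (simp add: divide_le_eq)
  show ?thesis using P1 P2 P3 by blast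
qed

end



lemma blk_less:
  fixes b b' s x x' :: nat
  assumes "b < b'" "x < b*s + s" "b'*s \<le> x'"
  shows "x < x'"
proof -
  have "b*s + s = (b+1)*s" by simp
  also have "\<dots> \<le> b'*s" using assms(1) by (intro mult_right_mono) auto
  finally show ?thesis using assms by simp
qed

lemma idx_inj:
  fixes t t' i i' m :: nat
  assumes "1 \<le> i" "i \<le> m" "1 \<le> i'" "i' \<le> m" "t*m + i - 1 = t'*m + i' - 1"
  shows "t = t'"
proof -
  have a: "t*m + (i - 1) = t'*m + (i' - 1)" using assms by simp
  have dm: "(u*m + j) div m = u" if "j < m" for u j :: nat
  proof -
    have "m > 0" using that by simp
    then show ?thesis using that by (simp add: div_add1_eq)
  qed
  have "(t*m + (i - 1)) div m = t" by (rule dm) (use assms(1,2) in simp)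
  moreover have "(t'*m + (i' - 1)) div m = t'" by (rule dm) (use assms(3,4) in simp)
  ultimately show ?thesis using a by simp
qed

lemma idx_bound:
  fixes t T i m s :: nat
  assumes "t < T" "1 \<le> i" "i \<le> m"
  shows "(t*m + i - 1)*s + s \<le> T*m*s"
proof -
  have "t*m + i \<le> T*m"
  proof -
    have "t*m + i \<le> t*m + m" using assms by simp
    also have "\<dots> = (t+1)*m" by simp
    also have "\<dots> \<le> T*m" using assms by (intro mult_right_mono) auto
    finally show ?thesis .
  qed
  then have "(t*m + i)*s \<le> T*m*s" by (intro mult_right_mono) auto
  moreover have "(t*m + i - 1)*s + s = (t*m+i)*s" using assms by (cases i) auto
  ultimately show ?thesis by simp
qed

lemma binom_dvd:
  fixes k d r :: nat
  assumes "1 \<le> r" "r \<le> 2*d"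
  shows "(2::int)^k dvd int ((2^k * fact (2*d)) choose r)"
proof -
  define s :: nat where "s = 2^k * fact (2*d)"
  have rd: "r dvd fact (2*d)" using assms by (simp add: dvd_fact)
  then obtain q where q: "fact (2*d) = r * q" by blast
  have "r * (s choose r) = s * ((s - 1) choose (r - 1))"
  proof -
    obtain r' where "r = Suc r'" using assms by (cases r) auto
    moreover have "s > 0" by (simp add: s_def)
    then obtain s' where "s = Suc s'" by (cases s) auto
    ultimately show ?thesis using Suc_times_binomial_eq[of s' r'] by (simp add: mult.commute)
  qed
  then have "r * (s choose r) = r * (2^k * q * ((s - 1) choose (r - 1)))"
    unfolding s_def using q by (simp add: algebra_simps)
  then have "s choose r = 2^k * (q * ((s - 1) choose (r - 1)))" using assms by simp
  then show ?thesis unfolding s_def by (metis dvd_triv_left of_nat_mult of_nat_numeral of_nat_power)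
qed

theorem lemma5p11:
  fixes \<eta> :: real and m k d :: nat
  assumes "\<eta> > 0" and "m > 0" and "k > 0" and "d > 0"
  shows "\<exists>n1::nat. n1 > 0 \<and> (\<forall>n\<ge>n1. \<forall>Q.
     kpoly k n Q \<and> kdeg k n Q = d \<longrightarrow>
     (\<exists>\<V> :: ((nat \<Rightarrow> nat set) \<times> (nat set \<Rightarrow> bool)) set.
        (\<forall>(I, c)\<in>\<V>. wildcards n m I \<and> block m I \<and> shift_ok n m I c) \<and>
        (\<forall>v\<in>\<V>. \<forall>w\<in>\<V>. v \<noteq> w \<longrightarrow>
            hj_space n m (fst v) (snd v) \<inter> hj_space n m (fst w) (snd w) = {}) \<and>
        real (card (cube n - (\<Union>(I, c)\<in>\<V>. hj_space n m I c))) / real (card (cube n)) \<le> \<eta> \<and>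
        (\<forall>(I, c)\<in>\<V>. kdeg k m (Q \<circ> hj_emb n m I c) < kdeg k n Q)))"
proof -
  define r where "r = 2*d"
  define s :: nat where "s = 2^k * fact (2*d)"
  define L where "L = m*s"
  have s1: "s \<ge> 1" by (simp add: s_def)
  have x1: "1 - 1/2^(2^L) < (1::real)" by simp
  obtain T :: nat where T: "(1 - 1/2^(2^L)) ^ T < \<eta>"
    using real_arch_pow_inv[OF assms(1) x1] by blast
  define M where "M = T*m*s + r"
  have rM: "r \<le> M" by (simp add: M_def)
  define CS :: "(nat set set \<Rightarrow> int) set" where "CS = PiE (Pow (Pow {..<r})) (\<lambda>_. {0..<2^k})"
  have finCS: "finite CS" unfolding CS_def by (intro finite_PiE) auto
  have neCS: "CS \<noteq> {}" unfolding CS_def by (simp add: PiE_eq_empty_iff)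
  obtain N :: nat where N: "\<forall>col. (\<forall>Y\<in>nsets {..<N} r. col Y \<in> CS) \<longrightarrow>
     (\<exists>H. H \<subseteq> {..<N} \<and> card H = M \<and> (\<forall>Y\<in>nsets H r. \<forall>Y'\<in>nsets H r. col Y = col Y'))"
    using ramsey_hom[OF finCS neCS, of r M] by blast
  show ?thesis
  proof (rule exI[of _ "N + m + 1"], intro conjI allI impI)
    show "N + m + 1 > 0" by simp
    fix n Q assume n: "N + m + 1 \<le> n" and Q: "kpoly k n Q \<and> kdeg k n Q = d"
    have "kpoly_le k n (kdeg k n Q) Q"
      using Q unfolding kpoly_def kdeg_def by (meson LeastI_ex)
    then obtain \<alpha> coef where rep: "\<forall>x\<in>cube n. Q x = (\<alpha> + (\<Sum>F\<in>{F. F \<subseteq> edges n \<and> F \<noteq> {} \<and> card F \<le> d}.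
              coef F * (\<Prod>e\<in>F. if x e then 1 else 0))) mod 2^k"
      using Q unfolding kpoly_le_def by blast
    define col where "col Y = chi k r coef (Suc ` Y)" for Y
    have colCS: "col Y \<in> CS" for Y
      unfolding col_def chi_def CS_def by (auto simp: restrict_PiE_iff)
    obtain H0 where H0: "H0 \<subseteq> {..<N}" "card H0 = M" and hom0: "\<forall>Y\<in>nsets H0 r. \<forall>Y'\<in>nsets H0 r. col Y = col Y'"
      using N colCS by blast
    define H where "H = Suc ` H0"
    have finH0: "finite H0" using H0 finite_subset by blast
    have finH: "finite H" using finH0 H_def by simp
    have cardH: "card H = M" using H0 H_def by (simp add: card_image)
    have Hn: "H \<subseteq> {1..n}" using H0 n H_def by auto
    have homH: "\<forall>Y Y'. Y \<subseteq> H \<and> card Y = r \<and> Y' \<subseteq> H \<and> card Y' = r \<longrightarrow> chi k r coef Y = chi k r coef Y'"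
    proof (intro allI impI)
      fix Y Y' assume YY: "Y \<subseteq> H \<and> card Y = r \<and> Y' \<subseteq> H \<and> card Y' = r"
      have bck: "\<exists>Z0. Z0 \<in> nsets H0 r \<and> Suc ` Z0 = Z" if Z: "Z \<subseteq> H" "card Z = r" for Z
      proof -
        define Z0 where "Z0 = (\<lambda>v. v - 1) ` Z"
        have pos: "\<forall>v\<in>Z. v \<ge> 1" using Z H_def by auto
        have eq: "Suc ` Z0 = Z" unfolding Z0_def image_image using pos by (force simp: image_iff)
        have inj: "inj_on (\<lambda>v. v - 1) Z"
        proof (rule inj_onI)
          fix x y assume xy: "x \<in> Z" "y \<in> Z" "x - 1 = y - 1"
          then have "1 \<le> x" "1 \<le> y" using pos by auto
          then show "x = y" using xy(3) by arith
        qed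
        have finZ: "finite Z" using Z finH finite_subset by blast
        have "Z0 \<subseteq> H0" unfolding Z0_def using Z H_def by auto
        moreover have "card Z0 = r" unfolding Z0_def using inj Z by (simp add: card_image)
        moreover have "finite Z0" unfolding Z0_def using finZ by simp
        ultimately show ?thesis using eq unfolding nsets_def by blast
      qed
      obtain Y0 where Y0: "Y0 \<in> nsets H0 r" "Suc ` Y0 = Y" using bck YY by metis
      obtain Y0' where Y0': "Y0' \<in> nsets H0 r" "Suc ` Y0' = Y'" using bck YY by metis
      have "col Y0 = col Y0'" using hom0 Y0 Y0' by blast
      then show "chi k r coef Y = chi k r coef Y'" using Y0 Y0' by (simp add: col_def)
    qed
    define e where "e j = sorted_list_of_set H ! j" for j
    have Ls: "sorted_wrt (<) (sorted_list_of_set H)" and Ll: "length (sorted_list_of_set H) = M"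
      using cardH by auto
    have e_mono: "e i < e j" if "i < j" "j < M" for i j
      using sorted_wrt_nth_less[OF Ls that(1)] that Ll by (simp add: e_def)
    have e_in: "e j \<in> H" if "j < M" for j
      using that Ll finH by (metis e_def nth_mem set_sorted_list_of_set)
    have e_inj: "inj_on e {..<M}"
    proof (rule inj_onI)
      fix i j assume ij: "i \<in> {..<M}" "j \<in> {..<M}" "e i = e j"
      show "i = j"
      proof (rule ccontr)
        assume "i \<noteq> j"
        then consider "i < j" | "j < i" by linarith
        then show False
        proof cases
          case 1 then show False using e_mono[OF 1] ij by simp
        next
          case 2 then show False using e_mono[OF 2] ij by simp
        qed
      qed
    qed
    define S' where "S' = e ` {..<M - r}"
    have S'H: "S' \<subseteq> H" using e_in by (auto simp: S'_def)
    have S'_def': "S' = (\<lambda>j. sorted_list_of_set H ! j) ` {..<M - r}" by (simp add: S'_def e_def)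
    define blk where "blk b = e ` {b*s ..< b*s + s}" for b
    define J where "J t i = blk (t*m + i - 1)" for t i
    have MT: "M - r = T*m*s" by (simp add: M_def)
    have blk_fin: "finite (blk b)" for b by (simp add: blk_def)
    have blk_card: "card (blk b) = s" if "b*s + s \<le> M - r" for b
    proof -
      have "inj_on e {b*s ..< b*s + s}" by (rule inj_on_subset[OF e_inj]) (use that in auto)
      then show ?thesis by (simp add: blk_def card_image)
    qed
    have blk_S': "blk b \<subseteq> S'" if "b*s + s \<le> M - r" for b
      using that by (auto simp: blk_def S'_def)
    have blk_ord: "x < y" if bb: "b < b'" "b'*s + s \<le> M - r" "x \<in> blk b" "y \<in> blk b'" for b b' x y
    proof -
      obtain i where i: "i \<in> {b*s ..< b*s + s}" "x = e i" using bb(3) by (auto simp: blk_def)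
      obtain j where j: "j \<in> {b'*s ..< b'*s + s}" "y = e j" using bb(4) by (auto simp: blk_def)
      have "i < j" using blk_less[OF bb(1)] i j by auto
      moreover have "j < M" using j bb(2) by auto
      ultimately show ?thesis using e_mono i j by simp
    qed
    have bnd: "(t*m + i - 1)*s + s \<le> M - r" if "t < T" "i \<in> {1..m}" for t i
      using idx_bound[of t T i m s] that MT by auto
    have bs: "boxsetup n m d k s (J t) S' coef" if t: "t < T" for t
    proof
      show "finite (J t i)" for i by (simp add: J_def blk_fin)
      show "card (J t i) = s" if "i \<in> {1..m}" for i using blk_card bnd[OF t that] by (simp add: J_def)
      show "J t i \<subseteq> S'" if "i \<in> {1..m}" for i using blk_S' bnd[OF t that] by (simp add: J_def)
      show "S' \<subseteq> {1..n}" using S'H Hn by simp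
      show "a < b" if "i \<in> {1..m}" "j \<in> {1..m}" "i < j" "a \<in> J t i" "b \<in> J t j" for i j a b
      proof -
        have "t*m + i - 1 < t*m + j - 1" using that by auto
        then show ?thesis using blk_ord bnd[OF t that(2)] that by (simp add: J_def)
      qed
      show "coef ((`) \<phi> ` F) mod 2^k = coef F mod 2^k"
        if "\<Union>F \<subseteq> S'" "card (\<Union>F) \<le> 2*d" "strict_mono_on (\<Union>F) \<phi>" "\<phi> ` \<Union>F \<subseteq> S'" for F \<phi>
        by (rule inv_lemma[OF finH cardH rM homH S'_def']) (use that r_def in auto)
      show "(2::int)^k dvd int (s choose r')" if "1 \<le> r'" "r' \<le> 2*d" for r'
        using binom_dvd[OF that] by (simp add: s_def)
    qed
    have Jord: "\<forall>a\<in>J t i. \<forall>b\<in>J t j. a < b" if "t < T" "i \<in> {1..m}" "j \<in> {1..m}" "i < j" for t i j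
      using boxsetup.ord[OF bs[OF that(1)]] that by blast
    have Jne: "J t i \<noteq> {}" if "t < T" "i \<in> {1..m}" for t i
      using boxsetup.cardI[OF bs[OF that(1)] that(2)] s1 by auto
    have Jn: "J t i \<subseteq> {1..n}" if "t < T" "i \<in> {1..m}" for t i
      using boxsetup.IS[OF bs[OF that(1)] that(2)] boxsetup.Sn[OF bs[OF that(1)]] by blast
    have MinMax: "Max (J t i) < Min (J t (Suc i)) \<and> Min (J t i) < Min (J t (Suc i))" if "t < T" "i \<in> {1..<m}" for t i
    proof -
      have i1: "i \<in> {1..m}" "Suc i \<in> {1..m}" using that by auto
      have a: "Max (J t i) \<in> J t i" "Min (J t i) \<in> J t i" using Jne[OF that(1) i1(1)] by (simp_all add: J_def blk_fin)
      have b: "Min (J t (Suc i)) \<in> J t (Suc i)" using Jne[OF that(1) i1(2)] by (simp add: J_def blk_fin)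
      show ?thesis using Jord[OF that(1) i1 lessI] a b by blast
    qed
    have wild: "wildcards n m (J t)" if t: "t < T" for t
      unfolding wildcards_def
    proof (intro conjI ballI impI)
      show "1 \<le> m" using assms by simp
      show "m \<le> n" using n by simp
      show "J t i \<noteq> {}" if "i \<in> {1..m}" for i using Jne t that by blast
      show "J t i \<subseteq> {1..n}" if "i \<in> {1..m}" for i using Jn t that by blast
      show "J t i \<inter> J t j = {}" if "i \<in> {1..m}" "j \<in> {1..m}" "i \<noteq> j" for i j
        using boxsetup.disj[OF bs[OF t] that] .
      show "Min (J t i) < Min (J t (Suc i))" if "i \<in> {1..<m}" for i using MinMax t that by blast
    qed
    have blockJ: "block m (J t)" if t: "t < T" for t
      unfolding block_def using MinMax t by blast
    have UUdj: "UU m J t \<inter> UU m J t' = {}" if "t < T" "t' < T" "t \<noteq> t'" for t t'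
    proof (rule ccontr)
      assume "UU m J t \<inter> UU m J t' \<noteq> {}"
      then obtain v i i' where v: "i \<in> {1..m}" "i' \<in> {1..m}" "v \<in> J t i" "v \<in> J t' i'"
        unfolding UU_def by blast
      define b where "b = t*m + i - 1"
      define b' where "b' = t'*m + i' - 1"
      have vb: "v \<in> blk b" "v \<in> blk b'" using v by (simp_all add: J_def b_def b'_def)
      have "b = b'"
      proof (rule ccontr)
        assume "b \<noteq> b'"
        then consider "b < b'" | "b' < b" by linarith
        then show False
        proof cases
          case 1 then show False using blk_ord[OF 1 _ vb(1) vb(2)] bnd[OF that(2) v(2)] b'_def by simp
        next
          case 2 then show False using blk_ord[OF 2 _ vb(2) vb(1)] bnd[OF that(1) v(1)] b_def by simp
        qed
      qed
      then have "t = t'" using idx_inj[of i m i' t t'] v b_def b'_def by auto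
      then show False using that by simp
    qed
    have UUfin: "finite (UU m J t) \<and> card (UU m J t) \<le> L" if t: "t < T" for t
    proof
      show "finite (UU m J t)" by (simp add: UU_def J_def blk_fin)
      have "card (UU m J t) \<le> (\<Sum>i\<in>{1..m}. card (J t i))" unfolding UU_def by (rule card_UN_le) simp
      also have "\<dots> = (\<Sum>i\<in>{1..m}. s)" using boxsetup.cardI[OF bs[OF t]] by simp
      finally show "card (UU m J t) \<le> L" by (simp add: L_def)
    qed
    obtain V where V1: "\<forall>v\<in>V. \<exists>t<T. \<exists>y\<in>cube n. v = (J t, cc m J t y)"
      and V2: "\<forall>v\<in>V. \<forall>w\<in>V. v \<noteq> w \<longrightarrow> hj_space n m (fst v) (snd v) \<inter> hj_space n m (fst w) (snd w) = {}"
      and V3: "real (card (cube n - (\<Union>(I, c)\<in>V. hj_space n m I c))) / real (card (cube n)) \<le> (1 - 1/2^(2^L))^T"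
      using cover[of T m J L n, OF UUdj UUfin] by blast
    show "\<exists>\<V> :: ((nat \<Rightarrow> nat set) \<times> (nat set \<Rightarrow> bool)) set.
        (\<forall>(I, c)\<in>\<V>. wildcards n m I \<and> block m I \<and> shift_ok n m I c) \<and>
        (\<forall>v\<in>\<V>. \<forall>w\<in>\<V>. v \<noteq> w \<longrightarrow>
            hj_space n m (fst v) (snd v) \<inter> hj_space n m (fst w) (snd w) = {}) \<and>
        real (card (cube n - (\<Union>(I, c)\<in>\<V>. hj_space n m I c))) / real (card (cube n)) \<le> \<eta> \<and>
        (\<forall>(I, c)\<in>\<V>. kdeg k m (Q \<circ> hj_emb n m I c) < kdeg k n Q)"
    proof (rule exI[of _ V], intro conjI)
      show "\<forall>(I, c)\<in>V. wildcards n m I \<and> block m I \<and> shift_ok n m I c"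
      proof (intro ballI)
        fix v assume "v \<in> V"
        then obtain t y where ty: "t < T" "y \<in> cube n" "v = (J t, cc m J t y)" using V1 by blast
        have sh: "shift_ok n m (J t) (cc m J t y)" using shift_cc ty by blast
        show "case v of (I, c) \<Rightarrow> wildcards n m I \<and> block m I \<and> shift_ok n m I c"
          using wild[OF ty(1)] blockJ[OF ty(1)] sh ty(3) by simp
      qed
      show "\<forall>v\<in>V. \<forall>w\<in>V. v \<noteq> w \<longrightarrow> hj_space n m (fst v) (snd v) \<inter> hj_space n m (fst w) (snd w) = {}"
        using V2 .
      show "real (card (cube n - (\<Union>(I, c)\<in>V. hj_space n m I c))) / real (card (cube n)) \<le> \<eta>"
        using V3 T by linarith
      show "\<forall>(I, c)\<in>V. kdeg k m (Q \<circ> hj_emb n m I c) < kdeg k n Q"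
      proof (intro ballI)
        fix v assume "v \<in> V"
        then obtain t y where ty: "t < T" "y \<in> cube n" "v = (J t, cc m J t y)" using V1 by blast
        have sh: "shift_ok n m (J t) (cc m J t y)" using shift_cc ty by blast
        have "kpoly_le k m (d - 1) (Q \<circ> hj_emb n m (J t) (cc m J t y))"
          using boxsetup.poly_drop[OF bs[OF ty(1)] assms(4) sh rep] .
        then have "kdeg k m (Q \<circ> hj_emb n m (J t) (cc m J t y)) \<le> d - 1"
          unfolding kdeg_def by (rule Least_le)
        then show "case v of (I, c) \<Rightarrow> kdeg k m (Q \<circ> hj_emb n m I c) < kdeg k n Q"
          using ty Q assms(4) by simp
      qed
    qed
  qed
qed

end
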